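(* Let $\mathcal H$ be a non-binary MMP hypergraph of hypergraph-dimension $n\ge 3$ with $k$ vertices and $l$ hyperedges. Then $\mathcal H$ satisfies the v-inequality $$HI_{cm}\le HI_{cM}\le HI^m_{cM}<HI_q=l .$$
   Context: A hypergraph $\mathcal H=(V,E)$ consists of a finite vertex set $V$ and a family $E$ of subsets of $V$ (hyperedges). An MMP hypergraph of hypergraph-dimension $n\ge3$ is a connected hypergraph in which: every vertex belongs to at least one hyperedge; every hyperedge contains at least $2$ and at most $n$ vertices; no hyperedge shares only one vertex with another hyperedge; and any two hyperedges intersect in at most $n-2$ vertices. Consider assignments of values $0$ and $1$ to the vertices and the two rules: (i) no two vertices within any hyperedge are both assigned $1$; (ii) in every hyperedge not all vertices are assigned $0$. $\mathcal H$ is non-binary if no $0$-$1$ assignment satisfies both (i) and (ii), and binary otherwise. The multiplicity $m(v)$ of a vertex is the number of hyperedges containing it. A classical assignment is a $0$-$1$ assignment satisfying rule (i) in which no further vertex can be switched from $0$ to $1$ without violating (i) (for binary hypergraphs this includes the assignments satisfying (i) and (ii)). The classical vertex index $HI_c$ of a classical assignment is the number of vertices assigned $1$; $HI_{cM}$ and $HI_{cm}$ are its maximum and minimum over classical assignments. The classical multiplexed vertex index $HI^m_c$ of a classical assignment is $\sum_{v \text{ assigned } 1} m(v)$, and $HI^m_{cM}$ is its maximum over classical assignments. The quantum hypergraph index $HI_q$ is the sum over all hyperedges $E_j$ of the detection probabilities $1/\kappa(j)$ of each of the $\kappa(j)$ considered vertices of $E_j$ (a vertex in several hyperedges counted once per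 hyperedge); it equals $l$. *)

theory Defs
  imports Complex_Main
begin

text \<open>A hypergraph is given by a vertex set V and a set E of hyperedges (subsets of V).
  A 0-1 assignment is represented by the set S of vertices assigned 1.\<close>

definition hg_adj :: "'a set set \<Rightarrow> 'a \<Rightarrow> 'a \<Rightarrow> bool" where
  "hg_adj E u v \<longleftrightarrow> (\<exists>e\<in>E. u \<in> e \<and> v \<in> e)"

definition hg_connected :: "'a set \<Rightarrow> 'a set set \<Rightarrow> bool" where
  "hg_connected V E \<longleftrightarrow> (\<forall>u\<in>V. \<forall>v\<in>V. (hg_adj E)\<^sup>*\<^sup>* u v)"

definition MMP_hypergraph :: "nat \<Rightarrow> 'a set \<Rightarrow> 'a set set \<Rightarrow> bool" where
  "MMP_hypergraph n V E \<longleftrightarrow>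
     3 \<le> n \<and> finite V \<and> (\<forall>e\<in>E. e \<subseteq> V) \<and>
     hg_connected V E \<and>
     (\<forall>v\<in>V. \<exists>e\<in>E. v \<in> e) \<and>
     (\<forall>e\<in>E. 2 \<le> card e \<and> card e \<le> n) \<and>
     (\<forall>e\<in>E. \<forall>f\<in>E. e \<noteq> f \<longrightarrow> card (e \<inter> f) \<noteq> 1) \<and>
     (\<forall>e\<in>E. \<forall>f\<in>E. e \<noteq> f \<longrightarrow> card (e \<inter> f) \<le> n - 2)"

definition rule_i :: "'a set set \<Rightarrow> 'a set \<Rightarrow> bool" where
  "rule_i E S \<longleftrightarrow> (\<forall>e\<in>E. \<forall>u\<in>e. \<forall>v\<in>e. u \<in> S \<and> v \<in> S \<longrightarrow> u = v)"

definition rule_ii :: "'a set set \<Rightarrow> 'a set \<Rightarrow> bool" where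
  "rule_ii E S \<longleftrightarrow> (\<forall>e\<in>E. \<exists>v\<in>e. v \<in> S)"

definition non_binary :: "'a set \<Rightarrow> 'a set set \<Rightarrow> bool" where
  "non_binary V E \<longleftrightarrow> \<not> (\<exists>S\<subseteq>V. rule_i E S \<and> rule_ii E S)"

definition classical_assignment :: "'a set \<Rightarrow> 'a set set \<Rightarrow> 'a set \<Rightarrow> bool" where
  "classical_assignment V E S \<longleftrightarrow>
     S \<subseteq> V \<and> rule_i E S \<and> (\<forall>v\<in>V - S. \<not> rule_i E (insert v S))"

definition multiplicity :: "'a set set \<Rightarrow> 'a \<Rightarrow> nat" where
  "multiplicity E v = card {e\<in>E. v \<in> e}"

definition HI_cM :: "'a set \<Rightarrow> 'a set set \<Rightarrow> nat" where
  "HI_cM V E = Max {card S | S. classical_assignment V E S}"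

definition HI_cm :: "'a set \<Rightarrow> 'a set set \<Rightarrow> nat" where
  "HI_cm V E = Min {card S | S. classical_assignment V E S}"

definition HI_m_cM :: "'a set \<Rightarrow> 'a set set \<Rightarrow> nat" where
  "HI_m_cM V E = Max {(\<Sum>v\<in>S. multiplicity E v) | S. classical_assignment V E S}"

text \<open>Quantum hypergraph index: each vertex of each hyperedge e is detected with
  probability 1/|e|; summed over all hyperedges (vertex counted once per hyperedge).\<close>
definition HI_q :: "'a set set \<Rightarrow> real" where
  "HI_q E = (\<Sum>e\<in>E. \<Sum>v\<in>e. 1 / real (card e))"

end

theory Submission
  imports Defs
begin

lemma card_filter_sum:
  assumes "finite A"
  shows "card {x\<in>A. P x} = (\<Sum>x\<in>A. if P x then 1 else (0::nat))"
proof -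
  have "(\<Sum>x\<in>A. if P x then 1 else (0::nat)) = card (A \<inter> {x. P x})"
    using assms by (simp add: sum.If_cases)
  moreover have "A \<inter> {x. P x} = {x\<in>A. P x}" by blast
  ultimately show ?thesis by simp
qed

lemma mult_sum_eq:
  assumes "finite S" "finite E"
  shows "(\<Sum>v\<in>S. multiplicity E v) = (\<Sum>e\<in>E. card (S \<inter> e))"
proof -
  have "(\<Sum>v\<in>S. multiplicity E v) = (\<Sum>v\<in>S. \<Sum>e\<in>E. if v \<in> e then 1 else (0::nat))"
    unfolding multiplicity_def using assms card_filter_sum[of E "\<lambda>e. _ \<in> e"] by simp
  also have "\<dots> = (\<Sum>e\<in>E. \<Sum>v\<in>S. if v \<in> e then 1 else (0::nat))"
    by (rule sum.swap)
  also have "\<dots> = (\<Sum>e\<in>E. card {v\<in>S. v \<in> e})"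
    using assms card_filter_sum[of S "\<lambda>v. v \<in> _"] by simp
  also have "\<dots> = (\<Sum>e\<in>E. card (S \<inter> e))"
    by (intro sum.cong) (auto simp: Int_def)
  finally show ?thesis .
qed

theorem lemma4:
  fixes n :: nat and V :: "'a set" and E :: "'a set set"
  assumes "MMP_hypergraph n V E"
    and "non_binary V E"
  shows "HI_cm V E \<le> HI_cM V E \<and> HI_cM V E \<le> HI_m_cM V E
         \<and> real (HI_m_cM V E) < HI_q E \<and> HI_q E = real (card E)"
proof -
  have finV: "finite V" and sub: "\<forall>e\<in>E. e \<subseteq> V"
    and cov: "\<forall>v\<in>V. \<exists>e\<in>E. v \<in> e" and c2: "\<forall>e\<in>E. 2 \<le> card e"
    using assms(1) unfolding MMP_hypergraph_def by auto
  have finE: "finite E"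
    using sub finV by (meson Pow_iff finite_Pow_iff finite_subset subsetI)
  have fine: "finite e" if "e \<in> E" for e using sub finV that finite_subset by blast
  define C where "C = {S. classical_assignment V E S}"
  have finC: "finite C"
    using finV unfolding C_def classical_assignment_def
    by (metis (no_types, lifting) Pow_iff finite_Pow_iff finite_subset mem_Collect_eq subsetI)
  define I where "I = {S. S \<subseteq> V \<and> rule_i E S}"
  have finI: "finite I" using finV unfolding I_def
    by (metis (no_types, lifting) Pow_iff finite_Pow_iff finite_subset mem_Collect_eq subsetI)
  have "{} \<in> I" unfolding I_def rule_i_def by auto
  then have "Max (card ` I) \<in> card ` I" using finI by (intro Max_in) auto
  then obtain S0 where S0: "S0 \<in> I" "card S0 = Max (card ` I)" by auto
  have "classical_assignment V E S0"
    unfolding classical_assignment_def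
  proof (intro conjI ballI)
    show "S0 \<subseteq> V" "rule_i E S0" using S0 unfolding I_def by auto
    fix v assume v: "v \<in> V - S0"
    show "\<not> rule_i E (insert v S0)"
    proof
      assume r: "rule_i E (insert v S0)"
      then have "insert v S0 \<in> I" using v S0 unfolding I_def by auto
      then have "card (insert v S0) \<le> card S0" using S0 finI by simp
      moreover have "finite S0" using S0 finV unfolding I_def using finite_subset by blast
      ultimately show False using v by simp
    qed
  qed
  then have Cne: "C \<noteq> {}" unfolding C_def by auto
  have ineq: "(\<Sum>v\<in>S. multiplicity E v) < card E" if "S \<in> C" for S
  proof -
    have SV: "S \<subseteq> V" and ri: "rule_i E S" using that unfolding C_def classical_assignment_def by auto
    have finS: "finite S" using SV finV finite_subset by blast
    have le1: "card (S \<inter> e) \<le> 1" if "e \<in> E" for e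
    proof -
      have "finite (S \<inter> e)" using fine[OF that] by simp
      moreover have "\<forall>x\<in>S \<inter> e. \<forall>y\<in>S \<inter> e. x = y" using ri that unfolding rule_i_def by blast
      ultimately show ?thesis using card_le_Suc0_iff_eq by (metis One_nat_def)
    qed
    have "\<not> rule_ii E S" using assms(2) SV ri unfolding non_binary_def by auto
    then obtain e where e: "e \<in> E" "S \<inter> e = {}"
      unfolding rule_ii_def by auto
    have "(\<Sum>e\<in>E. card (S \<inter> e)) < (\<Sum>e\<in>E. 1)"
      using le1 e finE by (intro sum_strict_mono_ex1) (auto intro!: bexI[of _ e])
    then show ?thesis using mult_sum_eq[OF finS finE] by simp
  qed
  have cardle: "card S \<le> (\<Sum>v\<in>S. multiplicity E v)" if "S \<in> C" for S
  proof -
    have SV: "S \<subseteq> V" using that unfolding C_def classical_assignment_def by auto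
    have "\<forall>v\<in>S. 1 \<le> multiplicity E v"
    proof
      fix v assume "v \<in> S"
      then obtain e where "e \<in> E" "v \<in> e" using SV cov by blast
      then have "{e\<in>E. v \<in> e} \<noteq> {}" by auto
      then show "1 \<le> multiplicity E v" unfolding multiplicity_def using finE
        by (simp add: Suc_le_eq card_gt_0_iff)
    qed
    then have "(\<Sum>v\<in>S. (1::nat)) \<le> (\<Sum>v\<in>S. multiplicity E v)" by (intro sum_mono) auto
    then show ?thesis by simp
  qed
  have eqCM: "HI_cM V E = Max (card ` C)" unfolding HI_cM_def C_def
    by (simp add: image_def Setcompr_eq_image) (metis Collect_cong)
  have eqCm: "HI_cm V E = Min (card ` C)" unfolding HI_cm_def C_def
    by (simp add: image_def) (metis Collect_cong)
  have eqmCM: "HI_m_cM V E = Max ((\<lambda>S. \<Sum>v\<in>S. multiplicity E v) ` C)" unfolding HI_m_cM_def C_def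
    by (simp add: image_def) (metis Collect_cong)
  have g1: "HI_cm V E \<le> HI_cM V E" unfolding eqCM eqCm using finC Cne
    by (meson Min_in Max_ge finite_imageI image_is_empty order_trans Min_le)
  have g2: "HI_cM V E \<le> HI_m_cM V E"
  proof -
    obtain S where S: "S \<in> C" "card S = Max (card ` C)"
    proof -
      have "Max (card ` C) \<in> card ` C" using finC Cne by (intro Max_in) auto
      then show ?thesis using that by auto
    qed
    have "card S \<le> (\<Sum>v\<in>S. multiplicity E v)" using cardle[OF S(1)] .
    also have "\<dots> \<le> HI_m_cM V E" unfolding eqmCM using S finC by auto
    finally show ?thesis using S eqCM by simp
  qed
  have g3: "HI_m_cM V E < card E"
  proof -
    obtain S where S: "S \<in> C" "(\<Sum>v\<in>S. multiplicity E v) = HI_m_cM V E"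
    proof -
      have "Max ((\<lambda>S. \<Sum>v\<in>S. multiplicity E v) ` C) \<in> (\<lambda>S. \<Sum>v\<in>S. multiplicity E v) ` C"
        using finC Cne by (intro Max_in) auto
      then show ?thesis using that eqmCM by auto
    qed
    then show ?thesis using ineq[OF S(1)] S(2) by simp
  qed
  have g4: "HI_q E = real (card E)"
  proof -
    have "\<And>e. e \<in> E \<Longrightarrow> (\<Sum>v\<in>e. 1 / real (card e)) = 1"
      using c2 by fastforce
    then show ?thesis unfolding HI_q_def by simp
  qed
  show ?thesis using g1 g2 g3 g4 by simp
qed

end
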